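(* Let $\mathcal{A} = (V, V_0, V_1, E, v_I)$ be an arena with $n$ vertices and $w \colon E \to -\mathbb{N} \cup \{\mathrm{R}\}$, and let $W$ be the largest absolute value of an integer weight in the image of $w$. If there is a $cap \in \mathbb{N}$ such that Player~$0$ wins $(\mathcal{A}, \mathsf{Recharge}(w, cap))$, then she also wins $(\mathcal{A}, \mathsf{Recharge}(w, 3\cdot(n-1)\cdot W))$, and she wins the latter game with a finite-state strategy of size three.
   Context: An arena $\mathcal{A} = (V, V_0, V_1, E, v_I)$ consists of a finite directed graph $(V,E)$ in which every vertex has at least one outgoing edge, a partition $V = V_0 \uplus V_1$, and an initial vertex $v_I$. A play is an infinite path $v_0 v_1 \cdots$ with $v_0 = v_I$. A strategy for Player~$i$ is a map $\sigma \colon V^* V_i \to V$ with $(v, \sigma(xv)) \in E$; a play is consistent with $\sigma$ if $v_{n+1} = \sigma(v_0\cdots v_n)$ whenever $v_n \in V_i$. Player~$0$ wins $(\mathcal{A}, \mathrm{Win})$ (with $\sigma$) if all plays consistent with $\sigma$ lie in $\mathrm{Win}$. A memory structure $\mathcal{M} = (M, m_I, \mathrm{Upd})$ has a finite set $M$ of states, initial state $m_I$, update $\mathrm{Upd} \colon M \times E \to M$, extended by $\mathrm{Upd}^+(v_0) = m_I$, $\mathrm{Upd}^+(v_0\cdots v_n v_{n+1}) = \mathrm{Upd}(\mathrm{Upd}^+(v_0\cdots v_n),(v_n,v_{n+1}))$; with a next-move function $\mathrm{Nxt} \colon V_0 \times M \to V$ (with $(v,\mathrm{Nxt}(v,m))\in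 E$) it induces the strategy $\sigma(v_0\cdots v_k) = \mathrm{Nxt}(v_k, \mathrm{Upd}^+(v_0\cdots v_k))$; such a strategy is finite-state of size $|M|$. A recharge weight function $w \colon E \to -\mathbb{N} \cup \{\mathrm{R}\}$ labels each edge with a non-positive integer or the recharge action $\mathrm{R}$. For a finite path $x$ without $\mathrm{R}$-edges, $\mathrm{EL}(x)$ is the sum of its edge weights. $\mathrm{EL}_{cap}(v_0\cdots v_k) = cap + \mathrm{EL}(x)$ where $x$ is the longest suffix of $v_0\cdots v_k$ containing no $\mathrm{R}$-edge. $\mathsf{Recharge}(w,cap) = \{v_0 v_1 \cdots \mid \forall k.\ \mathrm{EL}_{cap}(v_0\cdots v_k) \ge 0\}$. *)

theory Defs
  imports Main
begin

(* Arena (V, V0, V1, E, vI) with V1 = V - V0 *)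
definition arena :: "'v set \<Rightarrow> 'v set \<Rightarrow> ('v \<times> 'v) set \<Rightarrow> 'v \<Rightarrow> bool" where
  "arena V V0 E vI \<longleftrightarrow> finite V \<and> V0 \<subseteq> V \<and> E \<subseteq> V \<times> V \<and>
     (\<forall>v\<in>V. \<exists>u. (v, u) \<in> E) \<and> vI \<in> V"

definition play :: "('v \<times> 'v) set \<Rightarrow> 'v \<Rightarrow> (nat \<Rightarrow> 'v) \<Rightarrow> bool" where
  "play E vI \<rho> \<longleftrightarrow> \<rho> 0 = vI \<and> (\<forall>n. (\<rho> n, \<rho> (Suc n)) \<in> E)"

definition edges_of :: "'v list \<Rightarrow> ('v \<times> 'v) list" where
  "edges_of xs = zip xs (tl xs)"

definition fin_path :: "'v set \<Rightarrow> ('v \<times> 'v) set \<Rightarrow> 'v list \<Rightarrow> bool" where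
  "fin_path V E xs \<longleftrightarrow> xs \<noteq> [] \<and> set xs \<subseteq> V \<and> set (edges_of xs) \<subseteq> E"

definition strategy0 :: "'v set \<Rightarrow> 'v set \<Rightarrow> ('v \<times> 'v) set \<Rightarrow> ('v list \<Rightarrow> 'v) \<Rightarrow> bool" where
  "strategy0 V V0 E \<sigma> \<longleftrightarrow>
     (\<forall>xs. fin_path V E xs \<and> last xs \<in> V0 \<longrightarrow> (last xs, \<sigma> xs) \<in> E)"

definition consistent0 :: "'v set \<Rightarrow> ('v list \<Rightarrow> 'v) \<Rightarrow> (nat \<Rightarrow> 'v) \<Rightarrow> bool" where
  "consistent0 V0 \<sigma> \<rho> \<longleftrightarrow> (\<forall>n. \<rho> n \<in> V0 \<longrightarrow> \<rho> (Suc n) = \<sigma> (map \<rho> [0..<Suc n]))"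

definition wins0_with :: "'v set \<Rightarrow> 'v set \<Rightarrow> ('v \<times> 'v) set \<Rightarrow> 'v \<Rightarrow> (nat \<Rightarrow> 'v) set
    \<Rightarrow> ('v list \<Rightarrow> 'v) \<Rightarrow> bool" where
  "wins0_with V V0 E vI Win \<sigma> \<longleftrightarrow> strategy0 V V0 E \<sigma> \<and>
     (\<forall>\<rho>. play E vI \<rho> \<and> consistent0 V0 \<sigma> \<rho> \<longrightarrow> \<rho> \<in> Win)"

definition wins0 :: "'v set \<Rightarrow> 'v set \<Rightarrow> ('v \<times> 'v) set \<Rightarrow> 'v \<Rightarrow> (nat \<Rightarrow> 'v) set \<Rightarrow> bool" where
  "wins0 V V0 E vI Win \<longleftrightarrow> (\<exists>\<sigma>. wins0_with V V0 E vI Win \<sigma>)"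

definition upd_plus :: "'m \<Rightarrow> ('m \<Rightarrow> 'v \<times> 'v \<Rightarrow> 'm) \<Rightarrow> 'v list \<Rightarrow> 'm" where
  "upd_plus mI Upd xs = fold (\<lambda>e m. Upd m e) (edges_of xs) mI"

definition memory_structure :: "('v \<times> 'v) set \<Rightarrow> 'm set \<Rightarrow> 'm \<Rightarrow> ('m \<Rightarrow> 'v \<times> 'v \<Rightarrow> 'm) \<Rightarrow> bool" where
  "memory_structure E M mI Upd \<longleftrightarrow> finite M \<and> mI \<in> M \<and> (\<forall>m\<in>M. \<forall>e\<in>E. Upd m e \<in> M)"

definition next_move :: "'v set \<Rightarrow> ('v \<times> 'v) set \<Rightarrow> 'm set \<Rightarrow> ('v \<Rightarrow> 'm \<Rightarrow> 'v) \<Rightarrow> bool" where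
  "next_move V0 E M Nxt \<longleftrightarrow> (\<forall>v\<in>V0. \<forall>m\<in>M. (v, Nxt v m) \<in> E)"

definition induced_strategy :: "'m \<Rightarrow> ('m \<Rightarrow> 'v \<times> 'v \<Rightarrow> 'm) \<Rightarrow> ('v \<Rightarrow> 'm \<Rightarrow> 'v) \<Rightarrow> 'v list \<Rightarrow> 'v" where
  "induced_strategy mI Upd Nxt xs = Nxt (last xs) (upd_plus mI Upd xs)"

(* recharge weights: Cost c stands for the weight -c, Rchg for the recharge action R *)
datatype rweight = Cost nat | Rchg

definition no_recharge :: "('v \<times> 'v \<Rightarrow> rweight) \<Rightarrow> 'v list \<Rightarrow> bool" where
  "no_recharge w xs \<longleftrightarrow> (\<forall>e\<in>set (edges_of xs). w e \<noteq> Rchg)"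

definition EL :: "('v \<times> 'v \<Rightarrow> rweight) \<Rightarrow> 'v list \<Rightarrow> int" where
  "EL w xs = sum_list (map (\<lambda>e. case w e of Cost c \<Rightarrow> - int c | Rchg \<Rightarrow> 0) (edges_of xs))"

definition EL_cap :: "('v \<times> 'v \<Rightarrow> rweight) \<Rightarrow> nat \<Rightarrow> 'v list \<Rightarrow> int" where
  "EL_cap w cap xs = int cap + EL w (drop (LEAST j. no_recharge w (drop j xs)) xs)"

definition Recharge :: "('v \<times> 'v \<Rightarrow> rweight) \<Rightarrow> nat \<Rightarrow> (nat \<Rightarrow> 'v) set" where
  "Recharge w cap = {\<rho>. \<forall>k. EL_cap w cap (map \<rho> [0..<Suc k]) \<ge> 0}"

definition max_weight :: "('v \<times> 'v) set \<Rightarrow> ('v \<times> 'v \<Rightarrow> rweight) \<Rightarrow> nat" where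
  "max_weight E w = Max ({c. \<exists>e\<in>E. w e = Cost c} \<union> {0})"

end

theory Submission imports Defs begin

lemma edges_of_snoc: "xs \<noteq> [] \<Longrightarrow> edges_of (xs @ [y]) = edges_of xs @ [(last xs, y)]"
  unfolding edges_of_def
proof (induction xs)
  case Nil then show ?case by simp
next
  case (Cons a xs) then show ?case by (cases xs) auto
qed

lemma edges_of_drop: "edges_of (drop j xs) = drop j (edges_of xs)"
  unfolding edges_of_def by (simp add: drop_zip drop_tl)

lemma length_edges_of: "length (edges_of xs) = length xs - 1"
  unfolding edges_of_def by simp

lemma edges_of_nth: "Suc i < length xs \<Longrightarrow> (xs!i, xs!Suc i) \<in> set (edges_of xs)"
proof -
  assume a: "Suc i < length xs"
  then have "i < length (zip xs (tl xs))" by simp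
  then have "zip xs (tl xs) ! i \<in> set (zip xs (tl xs))" by (rule nth_mem)
  moreover have "zip xs (tl xs) ! i = (xs!i, xs!Suc i)" using a by (simp add: nth_tl)
  ultimately show ?thesis unfolding edges_of_def by simp
qed

lemma no_recharge_snoc:
  assumes "xs \<noteq> []" "w (last xs, y) \<noteq> Rchg"
  shows "no_recharge w (drop j (xs @ [y])) = no_recharge w (drop j xs)"
proof -
  have e: "edges_of (drop j (xs@[y])) = drop j (edges_of xs) @ drop (j - length (edges_of xs)) [(last xs, y)]"
    unfolding edges_of_drop edges_of_snoc[OF assms(1)] by (rule drop_append)
  have s: "set (drop (j - length (edges_of xs)) [(last xs, y)]) \<subseteq> {(last xs, y)}"
    by (metis set_drop_subset list.set(1) list.set(2))
  have e2: "set (edges_of (drop j (xs@[y]))) \<subseteq> set (edges_of (drop j xs)) \<union> {(last xs, y)}"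
    "set (edges_of (drop j xs)) \<subseteq> set (edges_of (drop j (xs@[y])))"
    unfolding e using s by (auto simp del: drop_append simp: edges_of_drop)
  show ?thesis unfolding no_recharge_def using e2 assms(2) by blast
qed

lemma EL_snoc: "xs \<noteq> [] \<Longrightarrow> EL w (xs@[y]) = EL w xs + (case w (last xs, y) of Cost c \<Rightarrow> - int c | Rchg \<Rightarrow> 0)"
  unfolding EL_def by (simp add: edges_of_snoc)

lemma EL_cap_single: "EL_cap w cap [v] = int cap"
proof -
  have "no_recharge w (drop 0 [v])" by (simp add: no_recharge_def edges_of_def)
  then have "(LEAST j. no_recharge w (drop j [v])) = 0" by (simp add: Least_eq_0)
  then show ?thesis by (simp add: EL_cap_def EL_def edges_of_def)
qed

lemma EL_cap_snoc_cost:
  assumes "xs \<noteq> []" "w (last xs, y) = Cost c"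
  shows "EL_cap w cap (xs@[y]) = EL_cap w cap xs - int c"
proof -
  have eq: "(LEAST j. no_recharge w (drop j (xs@[y]))) = (LEAST j. no_recharge w (drop j xs))"
    using no_recharge_snoc[of xs w y] assms by simp
  define L where "L = (LEAST j. no_recharge w (drop j xs))"
  have "drop (length xs - 1) xs = [last xs]" using assms(1)
    by (cases xs rule: rev_exhaust) auto
  then have "no_recharge w (drop (length xs - 1) xs)" by (simp add: no_recharge_def edges_of_def)
  then have "L \<le> length xs - 1" unfolding L_def by (rule Least_le)
  then have L: "L < length xs" using assms(1) by (cases xs) auto
  then have d: "drop L (xs@[y]) = drop L xs @ [y]" by simp
  have ne: "drop L xs \<noteq> []" using L by simp
  have la: "last (drop L xs) = last xs" using L by simp
  show ?thesis unfolding EL_cap_def eq L_def[symmetric] d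
    using EL_snoc[OF ne, of w y] la assms(2) by simp
qed

lemma EL_cap_snoc_R:
  assumes "xs \<noteq> []" "w (last xs, y) = Rchg"
  shows "EL_cap w cap (xs@[y]) = int cap"
proof -
  have "(LEAST j. no_recharge w (drop j (xs@[y]))) = length xs"
  proof (rule Least_equality)
    show "no_recharge w (drop (length xs) (xs @ [y]))" by (simp add: no_recharge_def edges_of_def)
  next
    fix j assume nr: "no_recharge w (drop j (xs @ [y]))"
    show "length xs \<le> j"
    proof (rule ccontr)
      assume "\<not> length xs \<le> j"
      then have "drop j (edges_of xs @ [(last xs, y)]) = drop j (edges_of xs) @ [(last xs,y)]"
        by (simp add: length_edges_of)
      then have "(last xs, y) \<in> set (edges_of (drop j (xs @ [y])))"
        unfolding edges_of_drop edges_of_snoc[OF assms(1)] by simp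
      then show False using nr assms(2) by (auto simp: no_recharge_def)
    qed
  qed
  then show ?thesis by (simp add: EL_cap_def EL_def edges_of_def)
qed

lemma EL_cap_step: "EL_cap w cap (map \<rho> [0..<Suc (Suc k)]) =
   (case w (\<rho> k, \<rho> (Suc k)) of Cost c \<Rightarrow> EL_cap w cap (map \<rho> [0..<Suc k]) - int c | Rchg \<Rightarrow> int cap)"
proof -
  have m: "map \<rho> [0..<Suc (Suc k)] = map \<rho> [0..<Suc k] @ [\<rho> (Suc k)]" by simp
  have ne: "map \<rho> [0..<Suc k] \<noteq> []" and l: "last (map \<rho> [0..<Suc k]) = \<rho> k" by simp_all
  show ?thesis unfolding m
    using EL_cap_snoc_cost[OF ne, of w] EL_cap_snoc_R[OF ne, of w] l
    by (cases "w (\<rho> k, \<rho> (Suc k))") auto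
qed

lemma EL_cap_0: "EL_cap w cap (map \<rho> [0..<Suc 0]) = int cap"
  using EL_cap_single by simp

lemma EL_cap_le: "EL_cap w cap (map \<rho> [0..<Suc k]) \<le> int cap"
proof (induction k)
  case 0 show ?case unfolding EL_cap_0 by simp
next
  case (Suc k) show ?case unfolding EL_cap_step
    by (cases "w (\<rho> k, \<rho> (Suc k))") (use Suc.IH in auto)
qed


lemma fin_path_snoc:
  assumes "fin_path V E xs" "(last xs, y) \<in> E" "E \<subseteq> V \<times> V"
  shows "fin_path V E (xs @ [y])"
  using assms unfolding fin_path_def by (auto simp: edges_of_snoc)

lemma play_in_V:
  assumes "arena V V0 E vI" "play E vI \<rho>"
  shows "\<rho> k \<in> V"
proof (cases k)
  case 0 then show ?thesis using assms by (simp add: arena_def play_def)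
next
  case (Suc j)
  then have "(\<rho> j, \<rho> k) \<in> E" using assms(2) by (simp add: play_def)
  then show ?thesis using assms(1) by (auto simp: arena_def)
qed

lemma play_fin_path:
  assumes "arena V V0 E vI" "play E vI \<rho>"
  shows "fin_path V E (map \<rho> [0..<Suc k])"
proof (induction k)
  case 0 then show ?case using play_in_V[OF assms, of 0] by (simp add: fin_path_def edges_of_def)
next
  case (Suc k)
  have m: "map \<rho> [0..<Suc (Suc k)] = map \<rho> [0..<Suc k] @ [\<rho> (Suc k)]" by simp
  have "(last (map \<rho> [0..<Suc k]), \<rho> (Suc k)) \<in> E" using assms(2) by (simp add: play_def)
  then show ?case unfolding m using fin_path_snoc[OF Suc.IH] assms(1) by (simp add: arena_def)
qed

lemma extend:
  assumes ar: "arena V V0 E vI" and st: "strategy0 V V0 E \<sigma>"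
    and fp: "fin_path V E h" and h0: "hd h = vI"
    and fc: "\<forall>i. Suc i < length h \<longrightarrow> h!i \<in> V0 \<longrightarrow> h!(Suc i) = \<sigma> (take (Suc i) h)"
  shows "\<exists>\<rho>. play E vI \<rho> \<and> consistent0 V0 \<sigma> \<rho> \<and> (\<forall>i<length h. \<rho> i = h!i)"
proof -
  define nx where "nx g = (if last g \<in> V0 then \<sigma> g else SOME u. (last g, u) \<in> E)" for g
  define hist where "hist = rec_nat h (\<lambda>_ g. g @ [nx g])"
  have h_0: "hist 0 = h" and h_S: "\<And>n. hist (Suc n) = hist n @ [nx (hist n)]"
    by (simp_all add: hist_def)
  have len: "length (hist n) = length h + n" for n
    by (induction n) (simp_all add: h_S h_0)
  have hne: "h \<noteq> []" using fp by (simp add: fin_path_def)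
  have tk: "take (length h + n) (hist (n + d)) = hist n" for n d
  proof (induction d)
    case 0 then show ?case using len by simp
  next
    case (Suc d) then show ?case using len[of "n+d"] by (simp add: h_S)
  qed
  have nth_eq: "hist m ! i = hist n ! i" if i1: "i < length h + n" and i2: "n \<le> m" for i n m
  proof -
    obtain d where "m = n + d" using i2 le_Suc_ex by blast
    then have "hist n ! i = take (length h + n) (hist m) ! i" using tk by simp
    also have "\<dots> = hist m ! i" using i1 by simp
    finally show ?thesis by simp
  qed
  define \<rho> where "\<rho> i = hist i ! i" for i
  have \<rho>_eq: "\<rho> i = hist n ! i" if "i < length h + n" for i n
  proof -
    have "hist (max i n) ! i = hist i ! i" using hne by (intro nth_eq) auto
    moreover have "hist (max i n) ! i = hist n ! i" using that by (intro nth_eq) auto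
    ultimately show ?thesis unfolding \<rho>_def by simp
  qed
  have map_eq: "map \<rho> [0..<length h + n] = hist n" for n
    by (rule nth_equalityI) (auto simp: len \<rho>_eq)
  have fph: "fin_path V E (hist n)" for n
  proof (induction n)
    case 0 then show ?case using fp h_0 by simp
  next
    case (Suc n)
    have ne: "hist n \<noteq> []" using len hne by (metis length_0_conv add_is_0)
    then have lV: "last (hist n) \<in> V" using Suc.IH by (auto simp: fin_path_def)
    have "(last (hist n), nx (hist n)) \<in> E"
    proof (cases "last (hist n) \<in> V0")
      case True then show ?thesis using st Suc.IH by (simp add: strategy0_def nx_def)
    next
      case False
      have "\<exists>u. (last (hist n), u) \<in> E" using ar lV by (auto simp: arena_def)
      then show ?thesis using False unfolding nx_def by (simp add: someI_ex[where P="\<lambda>u. (last (hist n), u) \<in> E"])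
    qed
    then show ?case unfolding h_S using fin_path_snoc[OF Suc.IH] ar by (simp add: arena_def)
  qed
  have agree: "\<forall>i<length h. \<rho> i = h!i" using \<rho>_eq[of _ 0] h_0 by simp
  have "play E vI \<rho>"
    unfolding play_def
  proof
    show "\<rho> 0 = vI" using agree hne h0 by (simp add: hd_conv_nth)
    show "\<forall>n. (\<rho> n, \<rho> (Suc n)) \<in> E"
    proof
      fix i
      have a: "\<rho> i = hist (Suc i) ! i" "\<rho> (Suc i) = hist (Suc i) ! Suc i" using hne
        by (auto intro!: \<rho>_eq)
      have "Suc i < length (hist (Suc i))" using len hne by (simp add: Suc_le_eq)
      then have "(hist (Suc i) ! i, hist (Suc i) ! Suc i) \<in> set (edges_of (hist (Suc i)))"
        by (rule edges_of_nth)
      then show "(\<rho> i, \<rho> (Suc i)) \<in> E" using fph[of "Suc i"] a by (auto simp: fin_path_def)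
    qed
  qed
  moreover have "consistent0 V0 \<sigma> \<rho>"
    unfolding consistent0_def
  proof (intro allI impI)
    fix i assume iV: "\<rho> i \<in> V0"
    show "\<rho> (Suc i) = \<sigma> (map \<rho> [0..<Suc i])"
    proof (cases "Suc i < length h")
      case True
      have "take (Suc i) h = map \<rho> [0..<Suc i]"
        by (rule nth_equalityI) (use True agree in \<open>auto simp del: upt_Suc\<close>)
      then show ?thesis using fc True agree iV by auto
    next
      case False
      define n where "n = Suc i - length h"
      have ln: "length h + n = Suc i" using False n_def by simp
      have m: "map \<rho> [0..<Suc i] = hist n" using map_eq[of n] ln by simp
      have "last (hist n) = \<rho> i" using m[symmetric]
        by (simp add: last_map)
      have "\<rho> (Suc i) = hist (Suc n) ! Suc i" using ln by (intro \<rho>_eq) simp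
      also have "\<dots> = nx (hist n)" using len[of n] ln by (simp add: h_S nth_append)
      also have "\<dots> = \<sigma> (hist n)" using \<open>last (hist n) = \<rho> i\<close> iV by (simp add: nx_def)
      finally show ?thesis using m by simp
    qed
  qed
  ultimately show ?thesis using agree by blast
qed

definition good :: "('v \<times> 'v) set \<Rightarrow> ('v \<times> 'v \<Rightarrow> rweight) \<Rightarrow> 'v set \<Rightarrow> ('v \<Rightarrow> nat) \<Rightarrow> 'v \<Rightarrow> 'v \<Rightarrow> bool" where
  "good E w U r v u \<longleftrightarrow> (v,u) \<in> E \<and> u \<in> U \<and> (\<forall>c. w (v,u) = Cost c \<longrightarrow> r u + c \<le> r v)"

lemma good_E: "good E w U r v u \<Longrightarrow> (v,u) \<in> E" by (simp add: good_def)
lemma good_U: "good E w U r v u \<Longrightarrow> u \<in> U" by (simp add: good_def)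
lemma good_c: "good E w U r v u \<Longrightarrow> w (v,u) = Cost c \<Longrightarrow> r u + c \<le> r v" by (simp add: good_def)

lemma cert_wins:
  assumes ar: "arena V V0 E vI"
    and vI: "vI \<in> U" and bnd: "\<forall>v\<in>U. r v \<le> K"
    and c0: "\<forall>v\<in>U. v \<in> V0 \<longrightarrow> (\<exists>u. good E w U r v u)"
    and c1: "\<forall>v\<in>U. v \<notin> V0 \<longrightarrow> (\<forall>u. (v,u)\<in>E \<longrightarrow> good E w U r v u)"
  shows "\<exists>(M::nat set) mI Upd Nxt. memory_structure E M mI Upd \<and> card M = 3 \<and>
            next_move V0 E M Nxt \<and> wins0_with V V0 E vI (Recharge w K) (induced_strategy mI Upd Nxt)"
proof -
  define Nxt :: "'a \<Rightarrow> nat \<Rightarrow> 'a" where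
    "Nxt v m = (if v \<in> U \<and> (\<exists>u. good E w U r v u) then SOME u. good E w U r v u else SOME u. (v,u) \<in> E)" for v m
  define Upd :: "nat \<Rightarrow> 'a \<times> 'a \<Rightarrow> nat" where "Upd m e = 0" for m e
  define M :: "nat set" where "M = {0,1,2}"
  have edge: "(v, Nxt v m) \<in> E" if "v \<in> V0" for v m
  proof (cases "v \<in> U \<and> (\<exists>u. good E w U r v u)")
    case True
    then have "good E w U r v (SOME u. good E w U r v u)" by (metis someI_ex)
    then show ?thesis using True by (simp add: Nxt_def good_E)
  next
    case False
    have "\<exists>u. (v, u) \<in> E" using ar that by (auto simp: arena_def)
    then have "(v, SOME u. (v, u) \<in> E) \<in> E" by (metis someI_ex)
    then show ?thesis using False unfolding Nxt_def by (simp only: if_False)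
  qed
  have ms: "memory_structure E M 0 Upd" by (simp add: memory_structure_def M_def Upd_def)
  have cM: "card M = 3" by (simp add: M_def)
  have nm: "next_move V0 E M Nxt" using edge by (simp add: next_move_def)
  have st: "strategy0 V V0 E (induced_strategy 0 Upd Nxt)"
    using edge by (simp add: strategy0_def induced_strategy_def)
  have win: "\<rho> \<in> Recharge w K" if pl: "play E vI \<rho>" and co: "consistent0 V0 (induced_strategy 0 Upd Nxt) \<rho>" for \<rho>
  proof -
    have inv: "\<rho> k \<in> U \<and> int (r (\<rho> k)) \<le> EL_cap w K (map \<rho> [0..<Suc k])" for k
    proof (induction k)
      case 0 then show ?case using vI bnd pl by (simp add: EL_cap_single play_def)
    next
      case (Suc k)
      let ?v = "\<rho> k" and ?u = "\<rho> (Suc k)"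
      have g: "good E w U r ?v ?u"
      proof (cases "?v \<in> V0")
        case True
        have l: "last (map \<rho> [0..<Suc k]) = \<rho> k" by simp
        have "?u = induced_strategy 0 Upd Nxt (map \<rho> [0..<Suc k])"
          using co True by (simp add: consistent0_def del: upt_Suc)
        then have "?u = Nxt ?v (upd_plus 0 Upd (map \<rho> [0..<Suc k]))"
          unfolding induced_strategy_def l .
        moreover have "\<exists>u. good E w U r ?v u" using c0 Suc.IH True by blast
        ultimately show ?thesis using Suc.IH by (simp add: Nxt_def) (metis someI_ex)
      next
        case False
        then show ?thesis using c1 Suc.IH pl by (simp add: play_def)
      qed
      show ?case
      proof (cases "w (?v, ?u)")
        case (Cost c)
        then have "r ?u + c \<le> r ?v" using g by (simp add: good_def)
        then show ?thesis using g Suc.IH Cost unfolding EL_cap_step by (simp add: good_def)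
      next
        case Rchg
        then show ?thesis using g bnd unfolding EL_cap_step by (simp add: good_def)
      qed
    qed
    show ?thesis unfolding Recharge_def
    proof (intro CollectI allI)
      fix k show "0 \<le> EL_cap w K (map \<rho> [0..<Suc k])" using inv[of k] by linarith
    qed
  qed
  have "wins0_with V V0 E vI (Recharge w K) (induced_strategy 0 Upd Nxt)"
    unfolding wins0_with_def using st win by blast
  then show ?thesis using ms cM nm by blast
qed

lemma sigma_cert:
  assumes ar: "arena V V0 E vI" and win: "wins0_with V V0 E vI (Recharge w cap) \<sigma>"
  shows "\<exists>U r. U \<subseteq> V \<and> vI \<in> U \<and> (\<forall>v\<in>U. r v \<le> cap) \<and>
     (\<forall>v\<in>U. v \<in> V0 \<longrightarrow> (\<exists>u. good E w U r v u)) \<and>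
     (\<forall>v\<in>U. v \<notin> V0 \<longrightarrow> (\<forall>u. (v,u)\<in>E \<longrightarrow> good E w U r v u))"
proof -
  have st: "strategy0 V V0 E \<sigma>" and wp: "\<And>\<rho>. play E vI \<rho> \<Longrightarrow> consistent0 V0 \<sigma> \<rho> \<Longrightarrow> \<rho> \<in> Recharge w cap"
    using win by (auto simp: wins0_with_def)
  define Reach where "Reach v b \<longleftrightarrow> (\<exists>\<rho> k. play E vI \<rho> \<and> consistent0 V0 \<sigma> \<rho> \<and> \<rho> k = v \<and>
      EL_cap w cap (map \<rho> [0..<Suc k]) = int b)" for v b
  define U where "U = {v. \<exists>b. Reach v b}"
  define r where "r v = (LEAST b. Reach v b)" for v
  have rR: "Reach v (r v)" if "v \<in> U" for v using that unfolding U_def r_def by (auto intro: LeastI_ex)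
  have rle: "r v \<le> b" if "Reach v b" for v b unfolding r_def using that by (rule Least_le)
  have reach_play: "Reach (\<rho> k) (nat (EL_cap w cap (map \<rho> [0..<Suc k])))"
    if p1: "play E vI \<rho>" and p2: "consistent0 V0 \<sigma> \<rho>" for \<rho> k
  proof -
    have "0 \<le> EL_cap w cap (map \<rho> [0..<Suc k])" using wp[OF p1 p2] by (simp add: Recharge_def del: upt_Suc)
    then show ?thesis unfolding Reach_def using p1 p2 by (intro exI[of _ \<rho>] exI[of _ k]) simp
  qed
  have step: "good E w U r v u"
    if s1: "\<rho> k = v" and s2: "EL_cap w cap (map \<rho> [0..<Suc k]) = int (r v)"
      and s3: "play E vI \<rho>'" and s4: "consistent0 V0 \<sigma> \<rho>'"
      and s5: "map \<rho>' [0..<Suc k] = map \<rho> [0..<Suc k]" and s6: "\<rho>' (Suc k) = u" for \<rho> k v \<rho>' u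
  proof -
    have "\<rho>' k = \<rho> k" using s5 by simp
    then have vk: "\<rho>' k = v" using s1 by simp
    have E: "(v,u) \<in> E" using s3 vk s6 by (auto simp: play_def)
    have R: "Reach u (nat (EL_cap w cap (map \<rho>' [0..<Suc (Suc k)])))"
      using reach_play[OF s3 s4, of "Suc k"] s6 by simp
    have nn: "0 \<le> EL_cap w cap (map \<rho>' [0..<Suc (Suc k)])"
      using wp[OF s3 s4] by (simp only: Recharge_def mem_Collect_eq)
    have uU: "u \<in> U" using R unfolding U_def by blast
    have c: "r u + c \<le> r v" if wc: "w (v,u) = Cost c" for c
    proof -
      have "EL_cap w cap (map \<rho>' [0..<Suc (Suc k)]) = int (r v) - int c"
        unfolding EL_cap_step s5 vk s6 wc s2 by simp
      then show ?thesis using rle[OF R] nn by linarith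
    qed
    show ?thesis unfolding good_def using E uU c by blast
  qed
  have U_V: "U \<subseteq> V" unfolding U_def Reach_def using play_in_V[OF ar] by blast
  have bnd: "\<forall>v\<in>U. r v \<le> cap"
  proof
    fix v assume "v \<in> U"
    then obtain \<rho> k where "EL_cap w cap (map \<rho> [0..<Suc k]) = int (r v)"
      using rR unfolding Reach_def by blast
    then show "r v \<le> cap" using EL_cap_le[of w cap \<rho> k] by linarith
  qed
  have vIU: "vI \<in> U"
  proof -
    have "fin_path V E [vI]" using ar by (simp add: fin_path_def arena_def edges_of_def)
    then obtain \<rho> where p: "play E vI \<rho>" "consistent0 V0 \<sigma> \<rho>"
      using extend[OF ar st, of "[vI]"] by auto
    then have "\<rho> 0 = vI" by (simp add: play_def)
    then show ?thesis using reach_play[OF p, of 0] unfolding U_def by auto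
  qed
  have c0: "\<forall>v\<in>U. v \<in> V0 \<longrightarrow> (\<exists>u. good E w U r v u)"
  proof (intro ballI impI)
    fix v assume "v \<in> U"
    then obtain \<rho> k where "play E vI \<rho>" "consistent0 V0 \<sigma> \<rho>" "\<rho> k = v"
      "EL_cap w cap (map \<rho> [0..<Suc k]) = int (r v)"
      using rR unfolding Reach_def by blast
    then show "\<exists>u. good E w U r v u" using step by blast
  qed
  have c1: "\<forall>v\<in>U. v \<notin> V0 \<longrightarrow> (\<forall>u. (v,u)\<in>E \<longrightarrow> good E w U r v u)"
  proof (intro ballI impI allI)
    fix v u assume vU: "v \<in> U" and vV0: "v \<notin> V0" and vu: "(v,u) \<in> E"
    obtain \<rho> k where p: "play E vI \<rho>" "consistent0 V0 \<sigma> \<rho>" and vk: "\<rho> k = v"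
      and el: "EL_cap w cap (map \<rho> [0..<Suc k]) = int (r v)"
      using rR[OF vU] unfolding Reach_def by blast
    define h where "h = map \<rho> [0..<Suc k] @ [u]"
    have lh: "length h = Suc (Suc k)" by (simp add: h_def)
    have hn: "h ! i = (if i < Suc k then \<rho> i else u)" if "i < Suc (Suc k)" for i
      using that by (simp add: h_def nth_append del: upt_Suc)
    have fp: "fin_path V E h" unfolding h_def
      using fin_path_snoc[OF play_fin_path[OF ar p(1), of k], of u] vk vu ar by (simp add: arena_def)
    have hd: "hd h = vI" using hn[of 0] p(1) lh by (simp add: play_def) (metis hd_conv_nth list.size(3) nat.simps(3))
    have fc: "\<forall>i. Suc i < length h \<longrightarrow> h!i \<in> V0 \<longrightarrow> h!(Suc i) = \<sigma> (take (Suc i) h)"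
    proof (intro allI impI)
      fix i assume i1: "Suc i < length h" and i2: "h!i \<in> V0"
      show "h!(Suc i) = \<sigma> (take (Suc i) h)"
      proof (cases "i < k")
        case True
        have t: "take (Suc i) h = map \<rho> [0..<Suc i]"
          by (rule nth_equalityI) (use True lh hn in \<open>auto simp del: upt_Suc\<close>)
        have "\<rho> i \<in> V0" using i2 hn[of i] True by simp
        then have "\<rho> (Suc i) = \<sigma> (map \<rho> [0..<Suc i])" using p(2) by (simp add: consistent0_def del: upt_Suc)
        then show ?thesis using t hn[of "Suc i"] True by simp
      next
        case False
        then have "i = k" using i1 lh by simp
        then show ?thesis using i2 hn[of i] vk vV0 by simp
      qed
    qed
    obtain \<rho>' where p': "play E vI \<rho>'" "consistent0 V0 \<sigma> \<rho>'" and ag: "\<forall>i<length h. \<rho>' i = h!i"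
      using extend[OF ar st fp hd fc] by blast
    have m: "map \<rho>' [0..<Suc k] = map \<rho> [0..<Suc k]"
      by (rule nth_equalityI) (use ag hn lh in \<open>auto simp del: upt_Suc\<close>)
    have "\<rho>' (Suc k) = u" using ag hn[of "Suc k"] lh by simp
    then show "good E w U r v u" using step[OF vk el p' m] by simp
  qed
  show ?thesis using U_V vIU bnd c0 c1 by blast
qed

lemma compress_bound:
  fixes r :: "'a \<Rightarrow> nat"
  assumes fin: "finite V" and UV: "U \<subseteq> V" and vU: "v \<in> U"
  shows "W * card {t \<in> r ` U. t < r v} \<le> (card V - 1) * W"
proof -
  have fU: "finite U" using fin UV finite_subset by blast
  have "r v \<in> r ` U" using vU by simp
  moreover have "r v \<notin> {t \<in> r ` U. t < r v}" by simp
  ultimately have "{t \<in> r ` U. t < r v} \<subset> r ` U" by blast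
  then have "card {t \<in> r ` U. t < r v} < card (r ` U)" using fU by (simp add: psubset_card_mono)
  also have "\<dots> \<le> card U" by (rule card_image_le[OF fU])
  also have "\<dots> \<le> card V" using fin UV by (rule card_mono)
  finally have "card {t \<in> r ` U. t < r v} \<le> card V - 1" by simp
  then show ?thesis by (simp add: mult.commute)
qed

lemma compress_good:
  assumes fin: "finite V" and UV: "U \<subseteq> V" and wb: "\<forall>e\<in>E. \<forall>c. w e = Cost c \<longrightarrow> c \<le> W"
    and g: "good E w U r v u"
  shows "good E w U (\<lambda>v. W * card {t \<in> r ` U. t < r v}) v u"
proof -
  have fU: "finite U" using fin UV finite_subset by blast
  have E: "(v,u) \<in> E" and uU: "u \<in> U" using g by (auto simp: good_def)
  have "W * card {t \<in> r ` U. t < r u} + c \<le> W * card {t \<in> r ` U. t < r v}" if wc: "w (v,u) = Cost c" for c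
  proof -
    have cW: "c \<le> W" using wb E wc by blast
    have ruv: "r u + c \<le> r v" using g wc by (simp add: good_def)
    have fin2: "finite {t \<in> r ` U. t < r v}" using fU by simp
    show ?thesis
    proof (cases "c = 0")
      case True
      then have "{t \<in> r ` U. t < r u} \<subseteq> {t \<in> r ` U. t < r v}" using ruv by auto
      then have "card {t \<in> r ` U. t < r u} \<le> card {t \<in> r ` U. t < r v}" using fin2 by (rule card_mono[rotated])
      then show ?thesis using True by simp
    next
      case False
      then have sub: "insert (r u) {t \<in> r ` U. t < r u} \<subseteq> {t \<in> r ` U. t < r v}" using ruv uU by auto
      have "card (insert (r u) {t \<in> r ` U. t < r u}) = Suc (card {t \<in> r ` U. t < r u})"
        using fU by simp
      then have "Suc (card {t \<in> r ` U. t < r u}) \<le> card {t \<in> r ` U. t < r v}"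
        using card_mono[OF fin2 sub] by simp
      then have "W * Suc (card {t \<in> r ` U. t < r u}) \<le> W * card {t \<in> r ` U. t < r v}"
        by (rule mult_le_mono2)
      then show ?thesis using cW by (simp only: mult_Suc_right)
    qed
  qed
  then show ?thesis using E uU by (simp add: good_def)
qed

theorem corollary2:
  fixes V V0 :: "'v set" and E :: "('v \<times> 'v) set" and vI :: 'v
    and w :: "'v \<times> 'v \<Rightarrow> rweight"
  assumes "arena V V0 E vI"
    and "\<exists>cap::nat. wins0 V V0 E vI (Recharge w cap)"
  shows "wins0 V V0 E vI (Recharge w (3 * (card V - 1) * max_weight E w))
       \<and> (\<exists>(M::nat set) mI Upd Nxt. memory_structure E M mI Upd \<and> card M = 3 \<and>
            next_move V0 E M Nxt \<and>
            wins0_with V V0 E vI (Recharge w (3 * (card V - 1) * max_weight E w))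
              (induced_strategy mI Upd Nxt))"
proof -
  note ar = assms(1)
  obtain cap \<sigma> where win: "wins0_with V V0 E vI (Recharge w cap) \<sigma>"
    using assms(2) by (auto simp: wins0_def)
  obtain U r where UV: "U \<subseteq> V" and vI: "vI \<in> U" and
    c0: "\<forall>v\<in>U. v \<in> V0 \<longrightarrow> (\<exists>u. good E w U r v u)" and
    c1: "\<forall>v\<in>U. v \<notin> V0 \<longrightarrow> (\<forall>u. (v,u)\<in>E \<longrightarrow> good E w U r v u)"
    using sigma_cert[OF ar win] by blast
  define W where "W = max_weight E w"
  have finV: "finite V" using ar by (simp add: arena_def)
  have finE: "finite E" using ar finV unfolding arena_def by (metis finite_SigmaI finite_subset)
  have wb: "\<forall>e\<in>E. \<forall>c. w e = Cost c \<longrightarrow> c \<le> W"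
  proof (intro ballI allI impI)
    fix e c assume eE: "e \<in> E" and wc: "w e = Cost c"
    have "{c. \<exists>e\<in>E. w e = Cost c} \<subseteq> (\<lambda>e. case w e of Cost c \<Rightarrow> c | Rchg \<Rightarrow> 0) ` E"
      by (force split: rweight.splits)
    then have "finite {c. \<exists>e\<in>E. w e = Cost c}" using finE by (rule finite_subset[OF _ finite_imageI])
    then have "finite ({c. \<exists>e\<in>E. w e = Cost c} \<union> {0})" by simp
    moreover have "c \<in> {c. \<exists>e\<in>E. w e = Cost c} \<union> {0}" using eE wc by auto
    ultimately show "c \<le> W" unfolding W_def max_weight_def by (rule Max_ge)
  qed
  define r' where "r' v = W * card {t \<in> r ` U. t < r v}" for v
  have bnd: "\<forall>v\<in>U. r' v \<le> 3 * (card V - 1) * W"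
  proof
    fix v assume "v \<in> U"
    then have "r' v \<le> (card V - 1) * W" unfolding r'_def by (rule compress_bound[OF finV UV])
    then show "r' v \<le> 3 * (card V - 1) * W" by simp
  qed
  have gg: "good E w U r' v u" if "good E w U r v u" for v u
    unfolding r'_def using compress_good[OF finV UV wb that] .
  have c0': "\<forall>v\<in>U. v \<in> V0 \<longrightarrow> (\<exists>u. good E w U r' v u)" using c0 gg by blast
  have c1': "\<forall>v\<in>U. v \<notin> V0 \<longrightarrow> (\<forall>u. (v,u)\<in>E \<longrightarrow> good E w U r' v u)" using c1 gg by blast
  have main: "\<exists>(M::nat set) mI Upd Nxt. memory_structure E M mI Upd \<and> card M = 3 \<and>
            next_move V0 E M Nxt \<and> wins0_with V V0 E vI (Recharge w (3 * (card V - 1) * W)) (induced_strategy mI Upd Nxt)"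
    by (rule cert_wins[OF ar vI bnd c0' c1'])
  then have "wins0 V V0 E vI (Recharge w (3 * (card V - 1) * W))" unfolding wins0_def by blast
  then show ?thesis using main unfolding W_def by blast
qed
end
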